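(* Let $n\geq2$, $A\in\mathrm{SL}_n(\mathbb Z)$, $B\in M_n(\mathbb R)$ with $\exp(B)=A$, $d$ the dimension of the generalized eigenspace of $B$ for eigenvalue $0$ and $d'=\dim\ker B$, and let $M=\Gamma\backslash G(B)$ as in the context. There exists a sequence of admissible homogeneous metrics $g_\varepsilon$ on $M$ with uniformly bounded sectional curvature such that $\lambda^{inv}_{1,1}(M,g_\varepsilon)\to 0$ as $\varepsilon\to0$ if and only if $d\neq d'$ (i.e. the Jordan form of $B$ has a nonzero nilpotent block).
   Context: $G=G(B)$ is the image of $(x_1,\dots,x_n,y)\in\mathbb R^{n+1}\mapsto\begin{pmatrix}\exp(yB)&0&x\\0&1&y\\0&0&1\end{pmatrix}\in\mathrm{GL}_{n+2}(\mathbb R)$ (blocks of sizes $n,1,1$, $x=(x_1,\dots,x_n)^T$), and $\Gamma$ is the image of $\mathbb Z^{n+1}$; $M=\Gamma\backslash G$ is the suspension of the torus diffeomorphism $A$, fibred over $S^1$ by $y$. Let $X_i,Y$ be the left-invariant fields generated at the identity by $\partial/\partial x_i,\partial/\partial y$. A homogeneous metric on $M$ is induced by a left-invariant metric on $G$; admissible means there are a basis $V_1,\dots,V_n$ of $\mathrm{span}(X_i)$ and $Y'$ with $Y'-Y\in\mathrm{span}(X_i)$ such that $(V_1,\dots,V_n,Y')$ is orthonormal (so the projection to the circle of length 1 is a Riemannian submersion). $\Delta^1_{inv}$ is the Hodge Laplacian restricted to $1$-forms induced by left-invariant forms on $G$, and $\lambda^{inv}_{1,1}$ its first nonzero eigenvalue.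 *)

theory Defs
  imports "HOL-Analysis.Analysis"
begin

fun matpow :: "real^'n^'n \<Rightarrow> nat \<Rightarrow> real^'n^'n" where
  "matpow B 0 = mat 1"
| "matpow B (Suc k) = B ** matpow B k"

definition mat_exp :: "real^'n^'n \<Rightarrow> real^'n^'n" where
  "mat_exp B = (\<chi> i j. (\<Sum>k. (matpow B k $ i $ j) / fact k))"

definition gen_kernel_dim :: "real^'n^'n \<Rightarrow> nat" where
  "gen_kernel_dim B = dim {v. \<exists>k. matpow B k *v v = 0}"

definition kernel_dim :: "real^'n^'n \<Rightarrow> nat" where
  "kernel_dim B = dim {v. B *v v = 0}"

text \<open>The Lie algebra g of G(B) is identified with real^('n option):
  coordinate Some i is the X_i-component, coordinate None the Y-component.
  Brackets of the left-invariant fields: [X_i,X_j] = 0, [Y,X_i] = sum_j B_ji X_j.\<close>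

definition xpart :: "real^('n option) \<Rightarrow> real^'n" where
  "xpart u = (\<chi> i. u $ Some i)"

definition lie_bracket :: "real^'n^'n \<Rightarrow> real^('n option) \<Rightarrow> real^('n option) \<Rightarrow> real^('n option)" where
  "lie_bracket B u v =
     (let w = (u $ None) *\<^sub>R (B *v xpart v) - (v $ None) *\<^sub>R (B *v xpart u)
      in (\<chi> a. case a of None \<Rightarrow> 0 | Some i \<Rightarrow> w $ i))"

text \<open>A left-invariant metric is determined by an orthonormal basis F of g
  (column a of the invertible matrix F is the a-th frame vector). Everything below is
  expressed in the coordinates w.r.t. this orthonormal frame, so the inner product is the
  dot product.\<close>

definition admissible_frame :: "real^('n::finite option)^('n option) \<Rightarrow> bool" where
  "admissible_frame F \<longleftrightarrow> invertible F \<and> (\<forall>i. F $ None $ Some i = 0) \<and> F $ None $ None = 1"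

definition frame_bracket ::
  "real^'n^'n \<Rightarrow> real^('n::finite option)^('n option) \<Rightarrow> real^('n option) \<Rightarrow> real^('n option) \<Rightarrow> real^('n option)" where
  "frame_bracket B F u v = matrix_inv F *v lie_bracket B (F *v u) (F *v v)"

text \<open>Levi-Civita connection on left-invariant fields (Koszul formula).\<close>
definition lc_nabla ::
  "real^'n^'n \<Rightarrow> real^('n::finite option)^('n option) \<Rightarrow> real^('n option) \<Rightarrow> real^('n option) \<Rightarrow> real^('n option)" where
  "lc_nabla B F u v = (\<chi> c. (1/2) * (frame_bracket B F u v \<bullet> axis c 1
        - frame_bracket B F v (axis c 1) \<bullet> u + frame_bracket B F (axis c 1) u \<bullet> v))"

definition curv ::
  "real^'n^'n \<Rightarrow> real^('n::finite option)^('n option) \<Rightarrow> real^('n option) \<Rightarrow> real^('n option) \<Rightarrow> real^('n option) \<Rightarrow> real^('n option)" where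
  "curv B F u v w = lc_nabla B F u (lc_nabla B F v w) - lc_nabla B F v (lc_nabla B F u w)
                    - lc_nabla B F (frame_bracket B F u v) w"

definition sec_curv ::
  "real^'n^'n \<Rightarrow> real^('n::finite option)^('n option) \<Rightarrow> real^('n option) \<Rightarrow> real^('n option) \<Rightarrow> real" where
  "sec_curv B F u v = (curv B F u v v \<bullet> u) / ((u \<bullet> u) * (v \<bullet> v) - (u \<bullet> v)^2)"

text \<open>Invariant 1-forms: alpha(e_a) = alpha $ a in the orthonormal frame;
  d alpha (x,y) = - alpha([x,y]). Inner product on 2-forms:
  <w,h> = sum_{a<b} w(e_a,e_b) h(e_a,e_b) = 1/2 sum_{a,b} ...\<close>
definition d_form ::
  "real^'n^'n \<Rightarrow> real^('n::finite option)^('n option) \<Rightarrow> real^('n option) \<Rightarrow> 'n option \<Rightarrow> 'n option \<Rightarrow> real" where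
  "d_form B F \<alpha> a b = - (\<alpha> \<bullet> frame_bracket B F (axis a 1) (axis b 1))"

definition two_form_inner ::
  "('n option \<Rightarrow> 'n option \<Rightarrow> real) \<Rightarrow> ('n option \<Rightarrow> 'n option \<Rightarrow> real) \<Rightarrow> real" where
  "two_form_inner \<omega> \<eta> = (1/2) * (\<Sum>a\<in>UNIV. \<Sum>b\<in>UNIV. \<omega> a b * \<eta> a b)"

text \<open>lambda is an eigenvalue of the Hodge Laplacian on invariant 1-forms,
  Delta = delta d (+ d delta, which vanishes on invariant 1-forms), delta being the
  (L^2-)adjoint of d.\<close>
definition inv_laplace_eigenvalue ::
  "real^'n^'n \<Rightarrow> real^('n::finite option)^('n option) \<Rightarrow> real \<Rightarrow> bool" where
  "inv_laplace_eigenvalue B F lam \<longleftrightarrow>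
     (\<exists>\<alpha>. \<alpha> \<noteq> 0 \<and> (\<forall>\<beta>. two_form_inner (d_form B F \<alpha>) (d_form B F \<beta>) = lam * (\<alpha> \<bullet> \<beta>)))"

definition lambda_inv_11 :: "real^'n^'n \<Rightarrow> real^('n::finite option)^('n option) \<Rightarrow> real" where
  "lambda_inv_11 B F = Inf {lam. lam > 0 \<and> inv_laplace_eigenvalue B F lam}"

end

theory Submission
  imports Defs
begin

declare transpose_matrix_vector[simp del] vector_transpose_matrix[simp del]

definition embx :: "real^'n \<Rightarrow> real^('n option)" where
  "embx z = (\<chi> a. case a of None \<Rightarrow> 0 | Some i \<Rightarrow> z $ i)"

definition fbC :: "real^'n^'n \<Rightarrow> real^('n option) \<Rightarrow> real^('n option) \<Rightarrow> real^('n option)" where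
  "fbC C u v = embx (C *v ((u $ None) *\<^sub>R xpart v - (v $ None) *\<^sub>R xpart u))"

definition lcC :: "real^'n^'n \<Rightarrow> real^('n::finite option) \<Rightarrow> real^('n option) \<Rightarrow> real^('n option)" where
  "lcC C u v = (\<chi> c. (1/2) * (fbC C u v \<bullet> axis c 1
        - fbC C v (axis c 1) \<bullet> u + fbC C (axis c 1) u \<bullet> v))"

definition curvC where
  "curvC C u v w = lcC C u (lcC C v w) - lcC C v (lcC C u w) - lcC C (fbC C u v) w"

definition secC where
  "secC C u v = (curvC C u v v \<bullet> u) / ((u \<bullet> u) * (v \<bullet> v) - (u \<bullet> v)^2)"

lemma embx_None[simp]: "embx z $ None = 0" by (simp add: embx_def)
lemma embx_Some[simp]: "embx z $ Some i = z $ i" by (simp add: embx_def)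
lemma xpart_nth[simp]: "xpart u $ i = u $ Some i" by (simp add: xpart_def)
lemma xpart_embx[simp]: "xpart (embx z) = z" by (simp add: vec_eq_iff)

lemma sum_option: "(\<Sum>a\<in>(UNIV::'n::finite option set). f a) = f None + (\<Sum>i\<in>UNIV. f (Some i))"
  by (simp add: UNIV_option_conv sum.reindex)

lemma inner_opt: "(u::real^('n::finite option)) \<bullet> v = u $ None * v $ None + xpart u \<bullet> xpart v"
  by (simp add: inner_vec_def sum_option)

lemma norm_opt: "norm (u::real^('n::finite option))^2 = (u $ None)^2 + norm (xpart u)^2"
  unfolding power2_norm_eq_inner inner_opt by (simp add: power2_eq_square)

lemma inner_ax[simp]: "(u::real^'m) \<bullet> axis c 1 = u $ c" by (simp add: inner_axis)
lemma inner_ax2[simp]: "axis c 1 \<bullet> (u::real^'m) = u $ c" by (simp add: inner_axis inner_commute)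
lemma axNN[simp]: "axis None 1 $ None = 1" by (simp add: axis_def)
lemma axSN[simp]: "axis (Some i) 1 $ None = 0" by (simp add: axis_def)
lemma axNS[simp]: "axis None 1 $ Some i = 0" by (simp add: axis_def)

lemma xpart_add[simp]: "xpart (u + v) = xpart u + xpart v" by (simp add: vec_eq_iff)
lemma xpart_diff[simp]: "xpart (u - v) = xpart u - xpart v" by (simp add: vec_eq_iff)
lemma xpart_scale[simp]: "xpart (c *\<^sub>R u) = c *\<^sub>R xpart u" by (simp add: vec_eq_iff)
lemma xpart_zero[simp]: "xpart 0 = 0" by (simp add: vec_eq_iff)
lemma xpart_axisN[simp]: "xpart (axis None 1) = 0" by (simp add: vec_eq_iff axis_def)
lemma xpart_axisS[simp]: "xpart (axis (Some i) 1) = axis i 1" by (simp add: vec_eq_iff axis_def)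
lemma embx_add[simp]: "embx (u + v) = embx u + embx v" by (simp add: vec_eq_iff embx_def split: option.split)
lemma embx_diff[simp]: "embx (u - v) = embx u - embx v" by (simp add: vec_eq_iff embx_def split: option.split)
lemma embx_scale[simp]: "embx (c *\<^sub>R u) = c *\<^sub>R embx u" by (simp add: vec_eq_iff embx_def split: option.split)
lemma embx_zero[simp]: "embx 0 = 0" by (simp add: vec_eq_iff embx_def split: option.split)

lemma inner_embx: "embx z \<bullet> v = z \<bullet> xpart v" by (simp add: inner_opt)
lemma inner_embx2: "v \<bullet> embx z = xpart v \<bullet> z" by (simp add: inner_opt)

lemma inner_Cax: "(x::real^'n) \<bullet> (C *v axis i 1) = (transpose C *v x) $ i"
  by (simp add: inner_vec_def matrix_vector_mult_def transpose_def axis_def mult.commute if_distrib cong: if_cong)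

lemma inner_Cax2: "(C *v axis i 1) \<bullet> (x::real^'n) = (transpose C *v x) $ i"
  by (simp add: inner_Cax inner_commute)

lemma lcC_closed: "lcC C u v =
   embx (((u $ None)/2) *\<^sub>R (C *v xpart v - transpose C *v xpart v)
         - ((v $ None)/2) *\<^sub>R (C *v xpart u + transpose C *v xpart u))
   + ((xpart u \<bullet> (C *v xpart v) + xpart v \<bullet> (C *v xpart u))/2) *\<^sub>R axis None 1"
proof -
  have "lcC C u v $ c = (embx (((u $ None)/2) *\<^sub>R (C *v xpart v - transpose C *v xpart v)
         - ((v $ None)/2) *\<^sub>R (C *v xpart u + transpose C *v xpart u))
   + ((xpart u \<bullet> (C *v xpart v) + xpart v \<bullet> (C *v xpart u))/2) *\<^sub>R axis None 1) $ c" for c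
  proof (cases c)
    case None
    then show ?thesis
      by (simp add: lcC_def fbC_def inner_embx inner_embx2 algebra_simps inner_commute)
  next
    case (Some i)
    then show ?thesis
      by (simp add: lcC_def fbC_def inner_embx inner_Cax inner_Cax2 algebra_simps
         matrix_vector_mult_diff_distrib matrix_vector_right_distrib)
  qed
  then show ?thesis by (simp add: vec_eq_iff)
qed

lemma matrix_inv_both:
  assumes "invertible (A::real^'n^'m)"
  shows "matrix_inv A ** A = mat 1" "A ** matrix_inv A = mat 1"
proof -
  have "\<exists>A'. A ** A' = mat 1 \<and> A' ** A = mat 1" using assms by (simp add: invertible_def)
  from someI_ex[OF this] show "matrix_inv A ** A = mat 1" "A ** matrix_inv A = mat 1"
    by (simp_all add: matrix_inv_def)
qed

lemma vec_eqI2: "(\<And>i. x $ i = y $ i) \<Longrightarrow> x = y" by (simp add: vec_eq_iff)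

definition blockP :: "real^('n::finite option)^('n option) \<Rightarrow> real^'n^'n" where
  "blockP F = (\<chi> i j. F $ Some i $ Some j)"

lemma lie_bracket_embx: "lie_bracket B p q = embx ((p $ None) *\<^sub>R (B *v xpart q) - (q $ None) *\<^sub>R (B *v xpart p))"
  by (simp add: lie_bracket_def Let_def embx_def)

lemma mv_option: "((F::real^('n::finite option)^'m) *v u) $ a = F $ a $ None * u $ None + (\<Sum>j\<in>UNIV. F $ a $ Some j * u $ Some j)"
  by (simp add: matrix_vector_mult_def sum_option)

lemma frame_general:
  fixes F :: "real^('n::finite option)^('n option)"
  assumes adm: "admissible_frame F" and QiP: "Qi ** blockP F = mat 1"
  shows "frame_bracket B F = fbC (Qi ** B ** blockP F)"
proof -
  define P where "P = blockP F"
  have inv: "invertible F" using adm by (simp add: admissible_frame_def)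
  have GF: "matrix_inv F ** F = mat 1" using inv by (simp add: matrix_inv_both)
  have PQi: "P ** Qi = mat 1" using QiP matrix_left_right_inverse unfolding P_def by blast
  have FNS: "F $ None $ Some i = 0" for i using adm by (simp add: admissible_frame_def)
  have FNN: "F $ None $ None = 1" using adm by (simp add: admissible_frame_def)
  define x0 where "x0 = (\<chi> i. F $ Some i $ None)"
  have emb: "F *v embx y = embx (P *v y)" for y
  proof -
    have "(F *v embx y) $ a = embx (P *v y) $ a" for a
      by (cases a) (simp_all only: mv_option FNS P_def blockP_def; simp add: matrix_vector_mult_def)+
    then show ?thesis by (simp add: vec_eq_iff)
  qed
  have xp: "xpart (F *v u) = P *v xpart u + (u $ None) *\<^sub>R x0" for u
    by (simp add: vec_eq_iff mv_option P_def blockP_def matrix_vector_mult_def x0_def sum_option)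
  have xN: "(F *v u) $ None = u $ None" for u
    by (simp add: mv_option FNS FNN)
  have BP: "B *v (P *v z) = P *v ((Qi ** B ** P) *v z)" for z
    by (metis PQi matrix_mul_assoc matrix_mul_lid matrix_vector_mul_assoc)
  have "frame_bracket B F u v = fbC (Qi ** B ** P) u v" for u v
  proof -
    define z where "z = (u $ None) *\<^sub>R xpart v - (v $ None) *\<^sub>R xpart u"
    have "lie_bracket B (F *v u) (F *v v) = embx (B *v (P *v z))"
      unfolding lie_bracket_embx xp xN z_def
      by (simp add: algebra_simps)
    also have "\<dots> = F *v embx ((Qi ** B ** P) *v z)" by (simp add: BP emb)
    finally have "frame_bracket B F u v = matrix_inv F *v (F *v embx ((Qi ** B ** P) *v z))"
      by (simp add: frame_bracket_def)
    also have "\<dots> = embx ((Qi ** B ** P) *v z)" by (simp add: matrix_vector_mul_assoc GF)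
    finally show ?thesis by (simp add: fbC_def z_def)
  qed
  then show ?thesis by (auto simp: P_def)
qed

lemma frame_Pi_exists:
  fixes F :: "real^('n::finite option)^('n option)"
  assumes adm: "admissible_frame F"
  shows "\<exists>Qi. Qi ** blockP F = mat 1"
proof -
  have inv: "invertible F" using adm by (simp add: admissible_frame_def)
  have GF: "matrix_inv F ** F = mat 1" using inv by (simp add: matrix_inv_both)
  have FNS: "F $ None $ Some i = 0" for i using adm by (simp add: admissible_frame_def)
  define G where "G = matrix_inv F"
  have "(\<chi> i j. G $ Some i $ Some j) ** blockP F = mat 1"
  proof -
    have "((\<chi> i j. G $ Some i $ Some j) ** blockP F) $ i $ j = mat 1 $ i $ j" for i j
    proof -
      have "(G ** F) $ Some i $ Some j = mat 1 $ Some i $ Some j" using GF G_def by simp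
      then show ?thesis
        by (simp add: matrix_matrix_mult_def sum_option FNS blockP_def mat_def)
    qed
    then show ?thesis by (simp add: vec_eq_iff)
  qed
  then show ?thesis by blast
qed

definition blk :: "real^'n^'n \<Rightarrow> real^('n::finite option)^('n option)" where
  "blk P = (\<chi> a b. case a of None \<Rightarrow> (case b of None \<Rightarrow> 1 | Some j \<Rightarrow> 0)
                          | Some i \<Rightarrow> (case b of None \<Rightarrow> 0 | Some j \<Rightarrow> P $ i $ j))"

lemma blk_mult: "blk P ** blk Q = blk (P ** Q)"
proof -
  have "(blk P ** blk Q) $ a $ b = blk (P ** Q) $ a $ b" for a b
    by (cases a; cases b) (simp_all add: blk_def matrix_matrix_mult_def sum_option)
  then show ?thesis by (simp add: vec_eq_iff)
qed

lemma blk_one: "blk (mat 1) = mat 1"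
proof (intro vec_eqI2)
  fix a b show "blk (mat 1) $ a $ b = (mat 1 :: real^('n::finite option)^('n option)) $ a $ b"
    by (cases a; cases b) (simp_all add: blk_def mat_def)
qed

lemma blk_frame:
  fixes P :: "real^'n::finite^'n"
  assumes "Qi ** P = mat 1"
  shows "admissible_frame (blk P)" "frame_bracket B (blk P) = fbC (Qi ** B ** P)"
proof -
  have "blk Qi ** blk P = mat 1" by (simp add: blk_mult assms blk_one)
  then have "invertible (blk P)" using invertible_left_inverse by blast
  then show adm: "admissible_frame (blk P)" by (simp add: admissible_frame_def blk_def)
  have bP: "blockP (blk P) = P" by (simp add: blockP_def blk_def vec_eq_iff)
  show "frame_bracket B (blk P) = fbC (Qi ** B ** P)"
    using frame_general[OF adm, of Qi B] by (simp add: bP assms)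
qed

lemma tr_inner: "(transpose C *v a) \<bullet> (b::real^'n::finite) = a \<bullet> (C *v b)"
  by (simp add: transpose_matrix_vector dot_lmul_matrix)

lemma mv_neg[simp]: "(C::real^'n^'m) *v (- x) = - (C *v x)"
  by (metis diff_0 matrix_vector_mult_0_right matrix_vector_mult_diff_distrib)
lemma embx_neg[simp]: "embx (- x) = - embx x" by (simp add: vec_eq_iff embx_def split: option.split)

lemma fbC_NN[simp]: "fbC C (axis None 1) (axis None 1) = 0" by (simp add: fbC_def)
lemma fbC_NS[simp]: "fbC C (axis None 1) (axis (Some j) 1) = embx (C *v axis j 1)" by (simp add: fbC_def)
lemma fbC_SN[simp]: "fbC C (axis (Some i) 1) (axis None 1) = - embx (C *v axis i 1)"
  by (simp add: fbC_def)
lemma fbC_SS[simp]: "fbC C (axis (Some i) 1) (axis (Some j) 1) = 0" by (simp add: fbC_def)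

lemma two_form_C:
  assumes "frame_bracket B F = fbC C"
  shows "two_form_inner (d_form B F \<alpha>) (d_form B F \<beta>) = (transpose C *v xpart \<alpha>) \<bullet> (transpose C *v xpart \<beta>)"
  unfolding two_form_inner_def d_form_def assms
  by (simp add: sum_option inner_embx2 inner_Cax inner_minus_right)
     (simp add: inner_vec_def)

lemma lap_eig:
  assumes "frame_bracket B F = fbC C"
  shows "inv_laplace_eigenvalue B F lam \<longleftrightarrow>
     (\<exists>\<alpha>. \<alpha> \<noteq> 0 \<and> (\<forall>\<beta>. (transpose C *v xpart \<alpha>) \<bullet> (transpose C *v xpart \<beta>) = lam * (\<alpha> \<bullet> \<beta>)))"
  unfolding inv_laplace_eigenvalue_def two_form_C[OF assms] by simp

lemma lap_eig_pos:
  assumes "frame_bracket B F = fbC C" "inv_laplace_eigenvalue B F lam" "lam > 0"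
  shows "\<exists>x. x \<noteq> 0 \<and> (\<forall>y. (transpose C *v x) \<bullet> (transpose C *v y) = lam * (x \<bullet> y))"
proof -
  obtain \<alpha> where a: "\<alpha> \<noteq> 0" "\<And>\<beta>. (transpose C *v xpart \<alpha>) \<bullet> (transpose C *v xpart \<beta>) = lam * (\<alpha> \<bullet> \<beta>)"
    using assms lap_eig by blast
  have "lam * \<alpha> $ None = 0" using a(2)[of "axis None 1"] by simp
  then have aN: "\<alpha> $ None = 0" using assms(3) by simp
  have "xpart \<alpha> \<noteq> 0"
  proof
    assume "xpart \<alpha> = 0"
    then have "\<alpha> $ a = 0" for a using aN by (cases a) (auto simp: vec_eq_iff)
    then show False using a(1) by (simp add: vec_eq_iff)
  qed
  moreover have "(transpose C *v xpart \<alpha>) \<bullet> (transpose C *v y) = lam * (xpart \<alpha> \<bullet> y)" for y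
    using a(2)[of "embx y"] by (simp add: inner_embx2)
  ultimately show ?thesis by blast
qed

lemma fb_add2: "fbC C u (a + b) = fbC C u a + fbC C u b"
  by (simp add: fbC_def algebra_simps)
lemma fb_scale2: "fbC C u (t *\<^sub>R a) = t *\<^sub>R fbC C u a"
  by (simp add: fbC_def algebra_simps)
lemma fb_uu: "fbC C u u = 0"
  by (simp add: fbC_def)

lemma lc_add1: "lcC C (a + b) w = lcC C a w + lcC C b w"
  by (simp add: lcC_closed algebra_simps inner_add_left inner_add_right add_divide_distrib)
lemma lc_scale1: "lcC C (t *\<^sub>R a) w = t *\<^sub>R lcC C a w"
  by (simp add: lcC_closed algebra_simps)
lemma lc_add2: "lcC C u (a + b) = lcC C u a + lcC C u b"
  by (simp add: lcC_closed algebra_simps inner_add_left inner_add_right add_divide_distrib)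
lemma lc_scale2: "lcC C u (t *\<^sub>R a) = t *\<^sub>R lcC C u a"
  by (simp add: lcC_closed algebra_simps)
lemma lc_zero1: "lcC C 0 w = 0"
  using lc_scale1[of C 0 0 w] by simp

lemma lin_lc1: "linear (\<lambda>a. lcC C a w)" by (rule linearI) (simp_all add: lc_add1 lc_scale1)
lemma lin_lc2: "linear (lcC C u)" by (rule linearI) (simp_all add: lc_add2 lc_scale2)
lemma lin_fb2: "linear (fbC C u)" by (rule linearI) (simp_all add: fb_add2 fb_scale2)

lemma lin_curv2: "linear (\<lambda>v. curvC C u v w)"
  unfolding curvC_def
  by (intro linear_compose_sub linear_compose[OF lin_lc1 lin_lc2, unfolded o_def]
       lin_lc1 linear_compose[OF lin_fb2 lin_lc1, unfolded o_def])

lemma lin_curv3: "linear (curvC C u v)"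
  unfolding curvC_def
  by (intro linear_compose_sub linear_compose[OF lin_lc2 lin_lc2, unfolded o_def] lin_lc2)

lemma curv_uu: "curvC C u u w = 0"
  by (simp add: curvC_def fb_uu lc_zero1)

lemma tr_inner2: "(a::real^'n::finite) \<bullet> (transpose C *v b) = b \<bullet> (C *v a)"
  by (metis inner_commute tr_inner)
lemma C_inner: "(C *v a) \<bullet> (b::real^'n::finite) = b \<bullet> (C *v a)"
  by (rule inner_commute)

lemma lc_metric: "lcC C u v \<bullet> w = - (lcC C u w \<bullet> v)"
  by (simp add: lcC_closed inner_add_left inner_diff_left inner_embx inner_opt tr_inner tr_inner2 C_inner algebra_simps add_divide_distrib diff_divide_distrib)

lemma curv_ww: "curvC C u v w \<bullet> w = 0"
proof -
  have a: "lcC C u (lcC C v w) \<bullet> w = - (lcC C u w \<bullet> lcC C v w)" by (rule lc_metric)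
  have b: "lcC C v (lcC C u w) \<bullet> w = - (lcC C v w \<bullet> lcC C u w)" by (rule lc_metric)
  have c: "lcC C (fbC C u v) w \<bullet> w = 0" using lc_metric[of C "fbC C u v" w w] by simp
  have d: "lcC C v w \<bullet> lcC C u w = lcC C u w \<bullet> lcC C v w" by (rule inner_commute)
  have "curvC C u v w \<bullet> w = lcC C u (lcC C v w) \<bullet> w - lcC C v (lcC C u w) \<bullet> w - lcC C (fbC C u v) w \<bullet> w"
    by (simp add: curvC_def inner_diff_left)
  then show ?thesis using a b c d by linarith
qed

lemma curv_shift: "curvC C u (v - t *\<^sub>R u) (v - t *\<^sub>R u) \<bullet> u = curvC C u v v \<bullet> u"
proof -
  have l2: "curvC C u (v - t *\<^sub>R u) w = curvC C u v w - t *\<^sub>R curvC C u u w" for w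
    by (simp add: linear_diff[OF lin_curv2] linear_scale[OF lin_curv2])
  have l3: "curvC C u v (v - t *\<^sub>R u) = curvC C u v v - t *\<^sub>R curvC C u v u"
    by (simp add: linear_diff[OF lin_curv3] linear_scale[OF lin_curv3])
  show ?thesis using curv_ww[of C u v u] by (simp add: l2 l3 curv_uu inner_diff_left)
qed

lemma nN: "\<bar>(u::real^('n::finite option)) $ None\<bar> \<le> norm u"
proof -
  have "(u $ None)^2 \<le> norm u ^2" using norm_opt[of u] by simp
  then show ?thesis by (metis abs_norm_cancel real_sqrt_abs real_sqrt_le_iff)
qed

lemma nx: "norm (xpart (u::real^('n::finite option))) \<le> norm u"
proof -
  have "norm (xpart u)^2 \<le> norm u ^2" using norm_opt[of u] by simp
  then show ?thesis by (simp add: power2_le_iff_abs_le)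
qed

lemma norm_embx: "norm (embx z) = norm z"
proof -
  have "norm (embx z)^2 = norm z ^2" using norm_opt[of "embx z"] by simp
  then show ?thesis by (simp add: power2_eq_iff_nonneg)
qed

lemma norm_axis1: "norm (axis c (1::real)) = 1" by (simp add: norm_eq_sqrt_inner)

locale Cbd =
  fixes C :: "real^'n::finite^'n" and L :: real
  assumes L0: "0 \<le> L" and hC: "\<And>y. norm (C *v y) \<le> L * norm y"
    and hT: "\<And>y. norm (transpose C *v y) \<le> L * norm y"
begin

lemma fb_bound: "norm (fbC C u v) \<le> 2 * L * norm u * norm v"
proof -
  define z where "z = (u $ None) *\<^sub>R xpart v - (v $ None) *\<^sub>R xpart u"
  have "norm z \<le> \<bar>u $ None\<bar> * norm (xpart v) + \<bar>v $ None\<bar> * norm (xpart u)"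
    unfolding z_def by (metis norm_scaleR norm_triangle_ineq4)
  also have "\<dots> \<le> norm u * norm v + norm v * norm u"
    by (intro add_mono mult_mono nN nx) auto
  finally have z: "norm z \<le> 2 * norm u * norm v" by simp
  have "norm (fbC C u v) = norm (C *v z)" by (simp add: fbC_def norm_embx z_def)
  also have "\<dots> \<le> L * norm z" by (rule hC)
  also have "\<dots> \<le> L * (2 * norm u * norm v)" using z L0 by (simp add: mult_left_mono)
  finally show ?thesis by simp
qed

lemma inner_C_bound: "\<bar>a \<bullet> (C *v b)\<bar> \<le> L * norm a * norm b"
proof -
  have "\<bar>a \<bullet> (C *v b)\<bar> \<le> norm a * norm (C *v b)" by (rule Cauchy_Schwarz_ineq2)
  also have "\<dots> \<le> norm a * (L * norm b)" by (simp add: hC mult_left_mono)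
  finally show ?thesis by (simp add: mult_ac)
qed

lemma lc_bound: "norm (lcC C u v) \<le> 3 * L * norm u * norm v"
proof -
  define A where "A = ((u $ None)/2) *\<^sub>R (C *v xpart v - transpose C *v xpart v)"
  define B where "B = ((v $ None)/2) *\<^sub>R (C *v xpart u + transpose C *v xpart u)"
  define s where "s = (xpart u \<bullet> (C *v xpart v) + xpart v \<bullet> (C *v xpart u))/2"
  have eq: "lcC C u v = embx (A - B) + s *\<^sub>R axis None 1"
    by (simp add: lcC_closed A_def B_def s_def)
  have nA: "norm A \<le> L * norm u * norm v"
  proof -
    have "norm (C *v xpart v - transpose C *v xpart v) \<le> L * norm (xpart v) + L * norm (xpart v)"
      using norm_triangle_ineq4[of "C *v xpart v" "transpose C *v xpart v"] hC[of "xpart v"] hT[of "xpart v"] by linarith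
    also have "\<dots> \<le> 2 * L * norm v" using nx[of v] L0 by (simp add: mult_left_mono)
    finally have "norm (C *v xpart v - transpose C *v xpart v) \<le> 2 * L * norm v" .
    moreover have "norm A = \<bar>u $ None\<bar> / 2 * norm (C *v xpart v - transpose C *v xpart v)"
      by (simp add: A_def)
    moreover have "0 \<le> \<bar>u $ None\<bar> / 2" by simp
    ultimately have "norm A \<le> \<bar>u $ None\<bar> / 2 * (2 * L * norm v)"
      by (metis mult_left_mono)
    also have "\<dots> \<le> norm u / 2 * (2 * L * norm v)"
      using nN[of u] L0 by (intro mult_right_mono) auto
    finally show ?thesis by (simp add: mult_ac)
  qed
  have nB: "norm B \<le> L * norm u * norm v"
  proof -
    have "norm (C *v xpart u + transpose C *v xpart u) \<le> L * norm (xpart u) + L * norm (xpart u)"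
      using norm_triangle_ineq[of "C *v xpart u" "transpose C *v xpart u"] hC[of "xpart u"] hT[of "xpart u"] by linarith
    also have "\<dots> \<le> 2 * L * norm u" using nx[of u] L0 by (simp add: mult_left_mono)
    finally have "norm (C *v xpart u + transpose C *v xpart u) \<le> 2 * L * norm u" .
    moreover have "norm B = \<bar>v $ None\<bar> / 2 * norm (C *v xpart u + transpose C *v xpart u)"
      by (simp add: B_def)
    moreover have "0 \<le> \<bar>v $ None\<bar> / 2" by simp
    ultimately have "norm B \<le> \<bar>v $ None\<bar> / 2 * (2 * L * norm u)"
      by (metis mult_left_mono)
    also have "\<dots> \<le> norm v / 2 * (2 * L * norm u)"
      using nN[of v] L0 by (intro mult_right_mono) auto
    finally show ?thesis by (simp add: mult_ac)
  qed
  have ns: "\<bar>s\<bar> \<le> L * norm u * norm v"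
  proof -
    have "\<bar>xpart u \<bullet> (C *v xpart v)\<bar> \<le> L * norm (xpart u) * norm (xpart v)" by (rule inner_C_bound)
    also have "\<dots> \<le> L * norm u * norm v"
      using nx[of u] nx[of v] L0 by (intro mult_mono) (auto intro: mult_left_mono)
    finally have 1: "\<bar>xpart u \<bullet> (C *v xpart v)\<bar> \<le> L * norm u * norm v" .
    have "\<bar>xpart v \<bullet> (C *v xpart u)\<bar> \<le> L * norm (xpart v) * norm (xpart u)" by (rule inner_C_bound)
    also have "\<dots> \<le> L * norm v * norm u"
      using nx[of u] nx[of v] L0 by (intro mult_mono) (auto intro: mult_left_mono)
    finally have 2: "\<bar>xpart v \<bullet> (C *v xpart u)\<bar> \<le> L * norm u * norm v" by (simp add: mult_ac)
    have "\<bar>s\<bar> \<le> (\<bar>xpart u \<bullet> (C *v xpart v)\<bar> + \<bar>xpart v \<bullet> (C *v xpart u)\<bar>)/2"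
      unfolding s_def by (simp add: abs_triangle_ineq)
    also have "\<dots> \<le> (L * norm u * norm v + L * norm u * norm v)/2"
      using 1 2 by (intro divide_right_mono add_mono) auto
    finally show ?thesis by simp
  qed
  have "norm (lcC C u v) \<le> norm (embx (A - B)) + norm (s *\<^sub>R (axis None 1 :: real^('n option)))"
    unfolding eq by (rule norm_triangle_ineq)
  also have "\<dots> \<le> norm A + norm B + \<bar>s\<bar>"
    using norm_triangle_ineq4[of A B] by (simp add: norm_embx norm_axis1 del: embx_diff)
  finally show ?thesis using nA nB ns by linarith
qed

lemma curv_bound: "norm (curvC C u v w) \<le> 24 * L^2 * norm u * norm v * norm w"
proof -
  have 1: "norm (lcC C u (lcC C v w)) \<le> 9 * L^2 * norm u * norm v * norm w"
  proof -
    have "norm (lcC C u (lcC C v w)) \<le> 3 * L * norm u * norm (lcC C v w)" by (rule lc_bound)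
    also have "\<dots> \<le> 3 * L * norm u * (3 * L * norm v * norm w)"
      using L0 by (intro mult_left_mono lc_bound) auto
    finally show ?thesis by (simp add: power2_eq_square mult_ac)
  qed
  have 2: "norm (lcC C v (lcC C u w)) \<le> 9 * L^2 * norm u * norm v * norm w"
  proof -
    have "norm (lcC C v (lcC C u w)) \<le> 3 * L * norm v * norm (lcC C u w)" by (rule lc_bound)
    also have "\<dots> \<le> 3 * L * norm v * (3 * L * norm u * norm w)"
      using L0 by (intro mult_left_mono lc_bound) auto
    finally show ?thesis by (simp add: power2_eq_square mult_ac)
  qed
  have 3: "norm (lcC C (fbC C u v) w) \<le> 6 * L^2 * norm u * norm v * norm w"
  proof -
    have "norm (lcC C (fbC C u v) w) \<le> 3 * L * norm (fbC C u v) * norm w" by (rule lc_bound)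
    also have "\<dots> \<le> 3 * L * (2 * L * norm u * norm v) * norm w"
      using L0 by (intro mult_right_mono mult_left_mono fb_bound) auto
    finally show ?thesis by (simp add: power2_eq_square mult_ac)
  qed
  have "norm (curvC C u v w) \<le> norm (lcC C u (lcC C v w)) + norm (lcC C v (lcC C u w)) + norm (lcC C (fbC C u v) w)"
    unfolding curvC_def
    using norm_triangle_ineq4[of "lcC C u (lcC C v w) - lcC C v (lcC C u w)" "lcC C (fbC C u v) w"]
      norm_triangle_ineq4[of "lcC C u (lcC C v w)" "lcC C v (lcC C u w)"] by linarith
  then show ?thesis using 1 2 3 by linarith
qed

lemma sec_bound:
  assumes D: "(u \<bullet> u) * (v \<bullet> v) - (u \<bullet> v)^2 \<noteq> 0"
  shows "\<bar>secC C u v\<bar> \<le> 24 * L^2"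
proof -
  define D where "D = (u \<bullet> u) * (v \<bullet> v) - (u \<bullet> v)^2"
  have Dpos: "D > 0"
  proof -
    have "(u \<bullet> v)^2 \<le> (u \<bullet> u) * (v \<bullet> v)"
      by (metis Cauchy_Schwarz_ineq)
    then show ?thesis using D D_def by linarith
  qed
  have u0: "u \<bullet> u \<noteq> 0" using Dpos D_def by auto
  define t where "t = (u \<bullet> v) / (u \<bullet> u)"
  define v' where "v' = v - t *\<^sub>R u"
  have nv: "(u \<bullet> u) * (v' \<bullet> v') = D"
    unfolding v'_def D_def t_def using u0
    by (simp add: inner_diff_left inner_diff_right inner_commute field_simps power2_eq_square)
  have "\<bar>curvC C u v v \<bullet> u\<bar> = \<bar>curvC C u v' v' \<bullet> u\<bar>" by (simp add: v'_def curv_shift)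
  also have "\<dots> \<le> norm (curvC C u v' v') * norm u" by (rule Cauchy_Schwarz_ineq2)
  also have "\<dots> \<le> (24 * L^2 * norm u * norm v' * norm v') * norm u"
    by (intro mult_right_mono curv_bound) auto
  also have "\<dots> = 24 * L^2 * ((u \<bullet> u) * (v' \<bullet> v'))"
    by (simp add: power2_norm_eq_inner[symmetric] power2_eq_square mult_ac)
  finally have "\<bar>curvC C u v v \<bullet> u\<bar> \<le> 24 * L^2 * D" using nv by simp
  then show ?thesis using Dpos unfolding secC_def D_def[symmetric]
    by (simp add: abs_div divide_le_eq)
qed

end

lemma mm_scaleR_right: "(A::real^'n^'m) ** (c *\<^sub>R X) = c *\<^sub>R (A ** X)"
  by (simp add: vec_eq_iff matrix_matrix_mult_def sum_distrib_left mult_ac)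
lemma mm_scaleR_left: "(c *\<^sub>R (A::real^'n^'m)) ** X = c *\<^sub>R (A ** X)"
  by (simp add: vec_eq_iff matrix_matrix_mult_def sum_distrib_left mult_ac)

lemma mm_add_right: "((A::real^'n^'m) + B) ** X = A ** X + B ** X"
  by (simp add: vec_eq_iff matrix_matrix_mult_def sum.distrib distrib_right)

lemma matpow_add: "matpow B (m + k) = matpow B m ** matpow B k"
  by (induction m) (simp_all add: matrix_mul_assoc)

lemma matpow_comm: "matpow B k ** B = B ** matpow B k"
  by (induction k) (simp_all add: matrix_mul_assoc[symmetric])

lemma matpow_conj:
  assumes "Qi ** P = mat 1" "P ** Qi = mat 1"
  shows "matpow (Qi ** B ** P) k = Qi ** matpow B k ** P"
proof (induction k)
  case 0 then show ?case using assms by simp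
next
  case (Suc k)
  have "Qi ** B ** P ** (Qi ** matpow B k ** P) = Qi ** B ** (P ** Qi) ** matpow B k ** P"
    by (simp add: matrix_mul_assoc)
  then show ?case using Suc assms by (simp add: matrix_mul_assoc)
qed

lemma lin_lmult: "linear (\<lambda>Z. (B::real^'n^'n) ** Z)"
  by (rule linearI) (simp_all add: matrix_add_ldistrib mm_scaleR_right)

lemma gen_ker_mono: "matpow B k *v v = 0 \<Longrightarrow> matpow B (m + k) *v v = 0"
  by (simp add: matpow_add matrix_vector_mul_assoc[symmetric])

lemma ker2_ker:
  fixes B :: "real^'n::finite^'n"
  assumes "gen_kernel_dim B = kernel_dim B" "B *v (B *v v) = 0"
  shows "B *v v = 0"
proof -
  define G where "G = {v. \<exists>k. matpow B k *v v = (0::real^'n)}"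
  define K where "K = {v. B *v v = (0::real^'n)}"
  have KG: "K \<subseteq> G"
  proof
    fix v assume "v \<in> K" then have "matpow B 1 *v v = 0" by (simp add: K_def)
    then show "v \<in> G" unfolding G_def by blast
  qed
  have sK: "subspace K" unfolding subspace_def K_def
    by (simp add: matrix_vector_right_distrib matrix_vector_mult_scaleR)
  have "dim G \<le> dim K" using assms(1) by (simp add: gen_kernel_dim_def kernel_dim_def G_def K_def)
  then have "span K = span G" using dim_eq_span[OF KG] by simp
  moreover have "span K = K" using sK by simp
  ultimately have "G \<subseteq> K" using span_superset[of G] by simp
  moreover have "matpow B 2 *v v = 0" using assms(2)
    by (simp add: numeral_2_eq_2 matrix_vector_mul_assoc[symmetric])
  then have "v \<in> G" unfolding G_def by blast
  ultimately show ?thesis by (auto simp: K_def)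
qed

lemma span_comm:
  assumes "Y \<in> span (range (matpow B))"
  shows "B ** Y = Y ** B"
  using assms
proof (induction rule: span_induct_alt)
  case base then show ?case by (simp add: vec_eq_iff matrix_matrix_mult_def)
next
  case (step c x y)
  then obtain k where "x = matpow B k" by auto
  then show ?case using step
    by (simp add: matrix_add_ldistrib mm_add_right mm_scaleR_right mm_scaleR_left matpow_comm)
qed

lemma exists_Y:
  fixes B :: "real^'n::finite^'n"
  assumes "gen_kernel_dim B = kernel_dim B"
  shows "\<exists>Y \<in> span (range (matpow B)). B ** B ** Y = B"
proof -
  define W where "W = span (range (matpow B))"
  define \<phi> where "\<phi> = (\<lambda>Z::real^'n^'n. B ** Z)"
  define V where "V = \<phi> ` W"
  have lin: "linear \<phi>" unfolding \<phi>_def by (rule lin_lmult)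
  have sW: "subspace W" unfolding W_def by (rule subspace_span)
  have sV: "subspace V" unfolding V_def using lin sW by (rule linear_subspace_image)
  have phiW: "\<phi> ` W \<subseteq> W"
  proof -
    have "\<phi> ` range (matpow B) \<subseteq> range (matpow B)"
    proof
      fix y assume "y \<in> \<phi> ` range (matpow B)"
      then obtain k where "y = B ** matpow B k" by (auto simp: \<phi>_def)
      then have "y = matpow B (Suc k)" by simp
      then show "y \<in> range (matpow B)" by blast
    qed
    then have "span (\<phi> ` range (matpow B)) \<subseteq> W" unfolding W_def by (rule span_mono)
    then show ?thesis using linear_span_image[OF lin] unfolding W_def by simp
  qed
  have phiV: "\<phi> ` V \<subseteq> V" unfolding V_def using phiW by auto
  have inj: "inj_on \<phi> V"
  proof -
    have "X = 0" if "X \<in> V" "\<phi> X = 0" for X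
    proof -
      obtain Z where Z: "X = B ** Z" using \<open>X \<in> V\<close> by (auto simp: V_def \<phi>_def)
      have "X *v v = 0" for v
      proof -
        have "B *v (B *v (Z *v v)) = 0" using that(2) Z
          by (metis \<phi>_def matrix_vector_mul_assoc matrix_vector_mult_0)
        then have "B *v (Z *v v) = 0" using ker2_ker[OF assms] by blast
        then show ?thesis by (simp add: Z matrix_vector_mul_assoc[symmetric])
      qed
      then show "X = 0" by (simp add: matrix_eq)
    qed
    then show ?thesis using linear_inj_on_iff_eq_0[OF lin sV] by blast
  qed
  have "dim (\<phi> ` V) = dim V"
  proof -
    have h: "span V = V" using sV by simp
    show ?thesis using dim_image_eq[OF lin, of V] inj unfolding h by blast
  qed
  then have "span (\<phi> ` V) = span V" using dim_eq_span[OF phiV] by simp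
  moreover have "subspace (\<phi> ` V)" using lin sV by (rule linear_subspace_image)
  ultimately have eqV: "\<phi> ` V = V" using sV by (metis span_eq_iff)
  have "mat 1 \<in> W" unfolding W_def
  proof (rule span_base)
    show "mat 1 \<in> range (matpow B)" by (metis matpow.simps(1) rangeI)
  qed
  then have "B \<in> V" unfolding V_def \<phi>_def by (metis image_eqI matrix_mul_rid)
  then have "B \<in> \<phi> ` V" using eqV by simp
  then obtain X where X: "X \<in> V" "B = B ** X" by (auto simp: \<phi>_def)
  then obtain Y where Y: "Y \<in> W" "X = B ** Y" by (auto simp: V_def \<phi>_def)
  show ?thesis using X Y unfolding W_def by (metis matrix_mul_assoc)
qed

declare transpose_matrix_vector[simp del] vector_transpose_matrix[simp del]

lemma scaleR_mv: "(c *\<^sub>R (A::real^'n^'m)) *v v = c *\<^sub>R (A *v v)"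
  by (simp add: vec_eq_iff matrix_vector_mult_def sum_distrib_left mult_ac)

definition fro :: "real^'n^'m \<Rightarrow> real" where
  "fro C = (\<Sum>i\<in>UNIV. (C $ i) \<bullet> (C $ i))"

lemma fro_nonneg: "0 \<le> fro C" by (simp add: fro_def sum_nonneg)

lemma fro_mv: "norm ((C::real^'n::finite^'m::finite) *v y) \<le> sqrt (fro C) * norm y"
proof -
  have comp: "(C *v y) $ i = C $ i \<bullet> y" for i
    by (simp add: matrix_vector_mult_def inner_vec_def)
  have "norm (C *v y)^2 = (\<Sum>i\<in>UNIV. ((C *v y) $ i)^2)"
    unfolding power2_norm_eq_inner inner_vec_def by (simp add: power2_eq_square)
  also have "\<dots> \<le> (\<Sum>i\<in>UNIV. (C $ i \<bullet> C $ i) * (y \<bullet> y))"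
    unfolding comp by (intro sum_mono Cauchy_Schwarz_ineq)
  also have "\<dots> = fro C * norm y ^2"
    by (simp add: fro_def sum_distrib_right power2_norm_eq_inner)
  finally have "norm (C *v y)^2 \<le> (sqrt (fro C) * norm y)^2"
    by (simp add: power_mult_distrib fro_nonneg)
  then show ?thesis using fro_nonneg[of C] by (simp add: power2_le_iff_abs_le)
qed

lemma fro_transpose: "fro (transpose (C::real^'n::finite^'m::finite)) = fro C"
  unfolding fro_def inner_vec_def transpose_def by simp (rule sum.swap)

lemma matpow_bound:
  assumes "\<And>w. norm (C *v w) \<le> L * norm w" "0 \<le> L"
  shows "norm (matpow C k *v v) \<le> L ^ k * norm v"
proof (induction k)
  case 0 then show ?case by simp
next
  case (Suc k)
  have "norm (matpow C (Suc k) *v v) = norm (C *v (matpow C k *v v))"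
    by (simp add: matrix_vector_mul_assoc)
  also have "\<dots> \<le> L * norm (matpow C k *v v)" by (rule assms(1))
  also have "\<dots> \<le> L * (L ^ k * norm v)" using Suc assms(2) by (simp add: mult_left_mono)
  finally show ?case by simp
qed

lemma span_conj_bound:
  fixes B :: "real^'n::finite^'n"
  assumes "Y \<in> span (range (matpow B))"
  shows "\<exists>M\<ge>0. \<forall>(P::real^'n^'n) (Qi::real^'n^'n). Qi ** P = mat 1 \<longrightarrow> P ** Qi = mat 1 \<longrightarrow> fro (Qi ** B ** P) \<le> F0 \<longrightarrow>
            (\<forall>y. norm ((Qi ** Y ** P) *v y) \<le> M * norm y)"
  using assms
proof (induction rule: span_induct_alt)
  case base
  then show ?case by (intro exI[of _ 0]) simp
next
  case (step c x y)
  obtain k where xk: "x = matpow B k" using step by auto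
  obtain M where M: "M \<ge> 0" "\<forall>(P::real^'n^'n) (Qi::real^'n^'n). Qi ** P = mat 1 \<longrightarrow> P ** Qi = mat 1 \<longrightarrow> fro (Qi ** B ** P) \<le> F0 \<longrightarrow>
            (\<forall>v. norm ((Qi ** y ** P) *v v) \<le> M * norm v)" using step(2) by blast
  define L where "L = sqrt \<bar>F0\<bar>"
  show ?case
  proof (intro exI[of _ "\<bar>c\<bar> * L ^ k + M"] conjI allI impI)
    show "0 \<le> \<bar>c\<bar> * L ^ k + M" using M(1) by (simp add: L_def)
    fix P Qi :: "real^'n^'n" and v :: "real^'n"
    assume h: "Qi ** P = mat 1" "P ** Qi = mat 1" "fro (Qi ** B ** P) \<le> F0"
    define C where "C = Qi ** B ** P"
    have hC: "norm (C *v w) \<le> L * norm w" for w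
    proof -
      have "norm (C *v w) \<le> sqrt (fro C) * norm w" by (rule fro_mv)
      also have "\<dots> \<le> L * norm w" using h(3) unfolding L_def C_def
        by (intro mult_right_mono) auto
      finally show ?thesis .
    qed
    have eq: "Qi ** (c *\<^sub>R x + y) ** P = c *\<^sub>R matpow C k + Qi ** y ** P"
      by (simp add: xk C_def matpow_conj[OF h(1,2)] matrix_add_ldistrib mm_add_right
                    mm_scaleR_right mm_scaleR_left)
    have "norm ((Qi ** (c *\<^sub>R x + y) ** P) *v v) \<le> \<bar>c\<bar> * norm (matpow C k *v v) + norm ((Qi ** y ** P) *v v)"
      unfolding eq matrix_vector_mult_add_rdistrib scaleR_mv
      using norm_triangle_ineq[of "c *\<^sub>R (matpow C k *v v)" "(Qi ** y ** P) *v v"] by simp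
    also have "\<dots> \<le> \<bar>c\<bar> * (L ^ k * norm v) + M * norm v"
    proof -
      have "norm ((Qi ** y ** P) *v v) \<le> M * norm v" using M(2)[rule_format, OF h(1) h(2) h(3)] by blast
      moreover have "norm (matpow C k *v v) \<le> L ^ k * norm v"
        by (rule matpow_bound[OF hC]) (simp add: L_def)
      ultimately show ?thesis by (intro add_mono mult_left_mono) auto
    qed
    finally show "norm ((Qi ** (c *\<^sub>R x + y) ** P) *v v) \<le> (\<bar>c\<bar> * L ^ k + M) * norm v"
      by (simp add: algebra_simps)
  qed
qed

lemma lam_lower:
  fixes B :: "real^'n::finite^'n"
  assumes Y1: "B ** B ** Y = B" and Y2: "B ** Y = Y ** B"
    and h: "Qi ** P = mat 1" "P ** Qi = mat 1"
    and M: "\<And>y. norm ((Qi ** Y ** P) *v y) \<le> M * norm y"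
    and x: "x \<noteq> 0" and eig: "\<And>y. (transpose (Qi ** B ** P) *v x) \<bullet> (transpose (Qi ** B ** P) *v y) = lam * (x \<bullet> y)"
    and lam: "lam > 0"
  shows "1 \<le> M^2 * lam"
proof -
  define C where "C = Qi ** B ** P"
  define YC where "YC = Qi ** Y ** P"
  have c1: "C ** C ** YC = C"
  proof -
    have "C ** C ** YC = Qi ** (B ** (P ** Qi) ** B ** (P ** Qi) ** Y) ** P"
      by (simp add: C_def YC_def matrix_mul_assoc)
    also have "\<dots> = C" using h Y1 by (simp add: C_def matrix_mul_assoc)
    finally show ?thesis .
  qed
  have c2: "C ** YC = YC ** C"
  proof -
    have "C ** YC = Qi ** (B ** (P ** Qi) ** Y) ** P" by (simp add: C_def YC_def matrix_mul_assoc)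
    also have "\<dots> = Qi ** (Y ** (P ** Qi) ** B) ** P" using h Y2 by simp
    also have "\<dots> = YC ** C" by (simp add: C_def YC_def matrix_mul_assoc)
    finally show ?thesis .
  qed
  define w where "w = transpose C *v x"
  have eig': "w \<bullet> (transpose C *v y) = lam * (x \<bullet> y)" for y using eig by (simp add: w_def C_def)
  have Cw: "C *v w = lam *\<^sub>R x"
  proof -
    have "y \<bullet> (C *v w - lam *\<^sub>R x) = 0" for y
      using eig'[of y] by (simp add: inner_diff_right tr_inner2 inner_commute)
    then have "(C *v w - lam *\<^sub>R x) \<bullet> (C *v w - lam *\<^sub>R x) = 0" by blast
    then show ?thesis by simp
  qed
  define \<beta> where "\<beta> = (1/lam) *\<^sub>R w"
  have xb: "x = C *v \<beta>" using Cw lam by (simp add: \<beta>_def matrix_vector_mult_scaleR)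
  have xfix: "C *v (YC *v x) = x"
  proof -
    have "C *v (YC *v x) = (C ** YC ** C) *v \<beta>" by (simp add: xb matrix_vector_mul_assoc matrix_mul_assoc)
    also have "\<dots> = (C ** C ** YC) *v \<beta>" by (metis c2 matrix_mul_assoc)
    also have "\<dots> = x" by (simp add: c1 xb)
    finally show ?thesis .
  qed
  have "x \<bullet> x = w \<bullet> (YC *v x)"
    using xfix tr_inner[of C x "YC *v x"] by (simp add: w_def)
  also have "\<dots> \<le> norm w * norm (YC *v x)" by (rule norm_cauchy_schwarz)
  also have "\<dots> \<le> norm w * (M * norm x)" by (simp add: M YC_def mult_left_mono)
  finally have 1: "norm x ^2 \<le> norm w * M * norm x" by (simp add: power2_norm_eq_inner mult_ac)
  have nx: "norm x > 0" using x by simp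
  have "norm x * norm x \<le> (M * norm w) * norm x" using 1 by (simp add: power2_eq_square mult_ac)
  then have 2: "norm x \<le> M * norm w" using nx by simp
  have "norm x ^2 \<le> (M * norm w)^2" using 2 nx by (intro power_mono) auto
  also have "\<dots> = M^2 * (w \<bullet> w)" by (simp add: power_mult_distrib power2_norm_eq_inner)
  also have "w \<bullet> w = lam * (x \<bullet> x)" using eig'[of x] by (simp add: w_def)
  finally have "norm x ^2 \<le> M^2 * lam * norm x^2" by (simp add: power2_norm_eq_inner mult_ac)
  then show ?thesis using nx by simp
qed

lemma Cax_nth: "((C::real^'n::finite^'m) *v axis j 1) $ i = C $ i $ j"
  by (simp add: matrix_vector_mult_def axis_def if_distrib cong: if_cong)
lemma CTax_nth: "(transpose (C::real^'n::finite^'n) *v axis j 1) $ i = C $ j $ i"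
  by (simp add: matrix_vector_mult_def axis_def transpose_def if_distrib cong: if_cong)

lemma ej_C: "axis j 1 \<bullet> ((C::real^'n::finite^'n) *v y) = (transpose C *v axis j 1) \<bullet> y"
  by (simp add: tr_inner)

lemma sec_NS:
  fixes C :: "real^'n::finite^'n" and j :: 'n
  defines "a \<equiv> C *v axis j 1" and "b \<equiv> transpose C *v axis j 1"
  shows "secC C (axis None 1) (axis (Some j) 1) = - (a \<bullet> a - b \<bullet> b)/4 - (a \<bullet> a + a \<bullet> b)/2"
proof -
  define eN :: "real^('n option)" where "eN = axis None 1"
  define X :: "real^('n option)" where "X = axis (Some j) 1"
  define k where "k = (1/2) *\<^sub>R (a - b)"
  have lXX: "lcC C X X = (axis j 1 \<bullet> a) *\<^sub>R eN"
    by (simp add: lcC_closed X_def eN_def a_def)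
  have lNN: "lcC C eN eN = 0" by (simp add: lcC_closed eN_def)
  have lNX: "lcC C eN X = embx k"
    by (simp add: lcC_closed X_def eN_def a_def b_def k_def algebra_simps)
  have l1: "lcC C eN (lcC C X X) = 0" by (simp add: lXX lc_scale2 lNN)
  have l2: "lcC C X (embx k) = ((axis j 1 \<bullet> (C *v k) + k \<bullet> a)/2) *\<^sub>R eN"
    by (simp add: lcC_closed X_def eN_def a_def)
  have fNX: "fbC C eN X = embx a" by (simp add: fbC_def eN_def X_def a_def)
  have l3: "lcC C (embx a) X = ((a \<bullet> a + axis j 1 \<bullet> (C *v a))/2) *\<^sub>R eN"
    by (simp add: lcC_closed X_def eN_def a_def)
  have cv: "curvC C eN X X \<bullet> eN = - (axis j 1 \<bullet> (C *v k) + k \<bullet> a)/2 - (a \<bullet> a + axis j 1 \<bullet> (C *v a))/2"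
    unfolding curvC_def l1 lNX l2 fNX l3 by (simp add: eN_def inner_diff_left) (simp add: field_simps)
  have den: "(eN \<bullet> eN) * (X \<bullet> X) - (eN \<bullet> X)^2 = 1" by (simp add: eN_def X_def)
  have "secC C eN X = - (axis j 1 \<bullet> (C *v k) + k \<bullet> a)/2 - (a \<bullet> a + axis j 1 \<bullet> (C *v a))/2"
    unfolding secC_def den cv by simp
  also have "\<dots> = - (b \<bullet> k + k \<bullet> a)/2 - (a \<bullet> a + b \<bullet> a)/2"
    by (simp only: ej_C b_def)
  also have "\<dots> = - (a \<bullet> a - b \<bullet> b)/4 - (a \<bullet> a + a \<bullet> b)/2"
    by (simp add: k_def inner_diff_left inner_diff_right inner_commute algebra_simps) (simp add: field_simps)
  finally show ?thesis by (simp add: eN_def X_def)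
qed

lemma sum_sec_NS:
  fixes C :: "real^'n::finite^'n"
  shows "(\<Sum>j\<in>UNIV. secC C (axis None 1) (axis (Some j) 1)) = - (fro C + trace (C ** C))/2"
proof -
  have s1: "(\<Sum>j\<in>UNIV. (C *v axis j 1) \<bullet> (C *v axis j 1)) = fro C"
    unfolding fro_def inner_vec_def Cax_nth by simp (rule sum.swap)
  have s2: "(\<Sum>j\<in>UNIV. (transpose C *v axis j 1) \<bullet> (transpose C *v axis j 1)) = fro C"
    unfolding fro_def inner_vec_def CTax_nth by simp
  have s3: "(\<Sum>j\<in>UNIV. (C *v axis j 1) \<bullet> (transpose C *v axis j 1)) = trace (C ** C)"
    unfolding trace_def inner_vec_def Cax_nth CTax_nth matrix_matrix_mult_def
    by (intro sum.cong refl) (simp add: transpose_def mult.commute)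
  show ?thesis unfolding sec_NS
    by (simp add: sum_subtractf sum_divide_distrib[symmetric] sum.distrib s1 s2 s3)
       (simp add: field_simps)
qed

lemma trace_conj:
  fixes B :: "real^'n::finite^'n"
  assumes "Qi ** P = mat 1" "P ** Qi = mat 1"
  shows "trace ((Qi ** B ** P) ** (Qi ** B ** P)) = trace (B ** B)"
proof -
  have "(Qi ** B ** P) ** (Qi ** B ** P) = Qi ** (B ** B ** P)"
    using assms by (metis matrix_mul_assoc matrix_mul_rid)
  then show ?thesis using assms trace_mul_sym[of Qi "B ** B ** P"]
    by (metis matrix_mul_assoc matrix_mul_rid)
qed

lemma fro_from_curv:
  fixes C :: "real^'n::finite^'n"
  assumes "\<And>j. \<bar>secC C (axis None 1) (axis (Some j) 1)\<bar> \<le> Cb"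
  shows "fro C + trace (C ** C) \<le> 2 * real CARD('n) * Cb"
proof -
  have "(\<Sum>j\<in>(UNIV::'n set). - Cb) \<le> (\<Sum>j\<in>UNIV. secC C (axis None 1) (axis (Some j) 1))"
  proof (rule sum_mono)
    fix j show "- Cb \<le> secC C (axis None 1) (axis (Some j) 1)" using assms[of j] by linarith
  qed
  then show ?thesis unfolding sum_sec_NS by simp
qed

lemma transfer_all:
  assumes "frame_bracket B F = fbC C"
  shows "lc_nabla B F = lcC C" "curv B F = curvC C" "sec_curv B F = secC C"
proof -
  show l: "lc_nabla B F = lcC C"
    by (simp add: fun_eq_iff lc_nabla_def lcC_def assms)
  show c: "curv B F = curvC C"
    by (simp add: fun_eq_iff curv_def curvC_def l assms)
  show "sec_curv B F = secC C"
    by (simp add: fun_eq_iff sec_curv_def secC_def c)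
qed

lemma only_if:
  fixes B :: "real^'n::finite^'n" and F :: "nat \<Rightarrow> real^('n option)^('n option)"
  assumes adm: "\<forall>k. admissible_frame (F k)"
    and curvb: "\<forall>k u v. ((u \<bullet> u) * (v \<bullet> v) - (u \<bullet> v)^2 \<noteq> 0) \<longrightarrow> \<bar>sec_curv B (F k) u v\<bar> \<le> Cb"
    and eig: "\<forall>k. \<exists>lam>0. inv_laplace_eigenvalue B (F k) lam"
    and lim: "(\<lambda>k. lambda_inv_11 B (F k)) \<longlonglongrightarrow> 0"
  shows "gen_kernel_dim B \<noteq> kernel_dim B"
proof
  assume dd: "gen_kernel_dim B = kernel_dim B"
  obtain Y where Y: "Y \<in> span (range (matpow B))" "B ** B ** Y = B"
    using exists_Y[OF dd] by blast
  have Yc: "B ** Y = Y ** B" using span_comm[OF Y(1)] .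
  define F0 where "F0 = 2 * real CARD('n) * Cb - trace (B ** B)"
  obtain M where M: "M \<ge> 0" "\<forall>(P::real^'n^'n) (Qi::real^'n^'n). Qi ** P = mat 1 \<longrightarrow> P ** Qi = mat 1 \<longrightarrow>
       fro (Qi ** B ** P) \<le> F0 \<longrightarrow> (\<forall>y. norm ((Qi ** Y ** P) *v y) \<le> M * norm y)"
    using span_conj_bound[OF Y(1), of F0] by blast
  have bound: "1 \<le> M^2 * lam" if lam: "lam > 0" "inv_laplace_eigenvalue B (F k) lam" for k lam
  proof -
    obtain Qi where Qi: "Qi ** blockP (F k) = mat 1" using frame_Pi_exists adm by blast
    define P where "P = blockP (F k)"
    have h1: "Qi ** P = mat 1" using Qi P_def by simp
    have h2: "P ** Qi = mat 1" using h1 matrix_left_right_inverse by blast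
    have fb: "frame_bracket B (F k) = fbC (Qi ** B ** P)"
      using frame_general[OF adm[rule_format, of k] Qi] P_def by simp
    have "\<bar>secC (Qi ** B ** P) (axis None 1) (axis (Some j) 1)\<bar> \<le> Cb" for j
    proof -
      have "((axis None 1 :: real^('n option)) \<bullet> axis None 1) * ((axis (Some j) 1 :: real^('n option)) \<bullet> axis (Some j) 1)
             - ((axis None 1 :: real^('n option)) \<bullet> axis (Some j) 1)^2 \<noteq> 0" by simp
      then show ?thesis using curvb transfer_all(3)[OF fb] by metis
    qed
    then have "fro (Qi ** B ** P) + trace ((Qi ** B ** P) ** (Qi ** B ** P)) \<le> 2 * real CARD('n) * Cb"
      by (rule fro_from_curv)
    then have "fro (Qi ** B ** P) \<le> F0" unfolding F0_def trace_conj[OF h1 h2] by simp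
    then have Mb: "\<And>y. norm ((Qi ** Y ** P) *v y) \<le> M * norm y" using M(2) h1 h2 by blast
    obtain x where x: "x \<noteq> 0" "\<And>y. (transpose (Qi ** B ** P) *v x) \<bullet> (transpose (Qi ** B ** P) *v y) = lam * (x \<bullet> y)"
      using lap_eig_pos[OF fb lam(2) lam(1)] by blast
    show ?thesis by (rule lam_lower[OF Y(2) Yc h1 h2 Mb x(1) x(2) lam(1)])
  qed
  have Mpos: "M > 0"
  proof -
    obtain lam where "lam > 0" "inv_laplace_eigenvalue B (F 0) lam" using eig by blast
    then have "1 \<le> M^2 * lam" using bound by blast
    then show ?thesis using M(1) by (cases "M = 0") auto
  qed
  have lb: "1 / M^2 \<le> lambda_inv_11 B (F k)" for k
  proof -
    define S where "S = {lam. lam > 0 \<and> inv_laplace_eigenvalue B (F k) lam}"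
    have ne: "S \<noteq> {}" using eig S_def by auto
    have "1 / M^2 \<le> Inf S"
    proof (rule cInf_greatest[OF ne])
      fix lam assume "lam \<in> S"
      then have "1 \<le> M^2 * lam" using bound S_def by blast
      then show "1 / M^2 \<le> lam" using Mpos by (simp add: divide_le_eq mult.commute)
    qed
    then show ?thesis by (simp add: lambda_inv_11_def S_def)
  qed
  have "eventually (\<lambda>k. lambda_inv_11 B (F k) < 1 / M^2) sequentially"
    using lim Mpos by (intro order_tendstoD(2)) auto
  then obtain k where "lambda_inv_11 B (F k) < 1 / M^2" by (meson eventually_sequentially order_refl)
  then show False using lb[of k] by simp
qed

lemma inv_from_kernel:
  fixes M :: "real^'n::finite^'n"
  assumes "\<And>c. M *v c = 0 \<Longrightarrow> c = 0"
  shows "\<exists>Mi. Mi ** M = mat 1 \<and> M ** Mi = mat 1"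
proof -
  have "inj ((*v) M)"
  proof (rule injI)
    fix x y assume "M *v x = M *v y"
    then have "M *v (x - y) = 0" by (simp add: matrix_vector_mult_diff_distrib)
    then have "x - y = 0" using assms by blast
    then show "x = y" by simp
  qed
  then obtain Mi where "Mi ** M = mat 1" using matrix_left_invertible_injective by blast
  then show ?thesis using matrix_left_right_inverse by blast
qed

lemma if01_mult: "(if P then 1 else 0) * (x::real) = (if P then x else 0)" by simp

lemma vm_axis: "axis i 1 v* (M::real^'n::finite^'m::finite) = M $ i"
  by (simp add: vec_eq_iff vector_matrix_mult_def axis_def if01_mult)

lemma mv_axis_eq: "(M::real^'n::finite^'m) *v axis s 1 = (\<chi> r. M $ r $ s)"
  by (simp add: vec_eq_iff Cax_nth)

lemma exists_w:
  fixes B :: "real^'n::finite^'n"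
  shows "matpow B k *v v = 0 \<Longrightarrow> B *v v \<noteq> 0 \<Longrightarrow> \<exists>w. B *v w \<noteq> 0 \<and> B *v (B *v w) = 0"
proof (induction k arbitrary: v)
  case 0 then show ?case by simp
next
  case (Suc k)
  show ?case
  proof (cases "B *v (B *v v) = 0")
    case True then show ?thesis using Suc by blast
  next
    case False
    have "matpow B (Suc k) = matpow B k ** B" by (simp add: matpow_comm)
    then have "matpow B k *v (B *v v) = 0" using Suc(2)
      by (simp only: matrix_vector_mul_assoc)
    then show ?thesis using Suc.IH False by blast
  qed
qed

lemma exists_w2:
  fixes B :: "real^'n::finite^'n"
  assumes "gen_kernel_dim B \<noteq> kernel_dim B"
  shows "\<exists>w. B *v w \<noteq> 0 \<and> B *v (B *v w) = 0"
proof -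
  define G where "G = {v. \<exists>k. matpow B k *v v = (0::real^'n)}"
  define K where "K = {v. B *v v = (0::real^'n)}"
  have KG: "K \<subseteq> G"
  proof
    fix v assume "v \<in> K" then have "matpow B 1 *v v = 0" by (simp add: K_def)
    then show "v \<in> G" unfolding G_def by blast
  qed
  have "\<not> G \<subseteq> K"
  proof
    assume "G \<subseteq> K" then have "G = K" using KG by blast
    then have "dim G = dim K" by simp
    then show False using assms unfolding gen_kernel_dim_def kernel_dim_def G_def K_def by blast
  qed
  then obtain v k where "matpow B k *v v = 0" "B *v v \<noteq> 0" by (auto simp: G_def K_def)
  then show ?thesis by (rule exists_w)
qed

lemma exists_minor:
  fixes a b :: "real^'n::finite"
  assumes "a \<noteq> 0" "\<And>c. b \<noteq> c *\<^sub>R a"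
  shows "\<exists>i1 i2. a $ i1 * b $ i2 - a $ i2 * b $ i1 \<noteq> 0"
proof (rule ccontr)
  assume "\<not> ?thesis"
  then have h: "a $ i1 * b $ i2 = a $ i2 * b $ i1" for i1 i2 by auto
  obtain i where i: "a $ i \<noteq> 0" using assms(1) by (auto simp: vec_eq_iff)
  have "b = (b $ i / a $ i) *\<^sub>R a"
  proof (rule vec_eqI2)
    fix j show "b $ j = ((b $ i / a $ i) *\<^sub>R a) $ j" using h[of i j] i by (simp add: field_simps)
  qed
  then show False using assms(2) by blast
qed

lemma axis_comp: "(axis i (1::real) :: real^'n::finite) $ p = (if p = i then 1 else 0)"
  by (simp add: axis_def)

lemma exists_C1:
  fixes B :: "real^'n::finite^'n"
  assumes "gen_kernel_dim B \<noteq> kernel_dim B"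
  shows "\<exists>(P1::real^'n^'n) (Pi1::real^'n^'n) i1 i2. i1 \<noteq> i2 \<and> Pi1 ** P1 = mat 1 \<and> P1 ** Pi1 = mat 1
     \<and> (\<forall>p. (Pi1 ** B ** P1) $ p $ i1 = 0)
     \<and> (\<forall>p. (Pi1 ** B ** P1) $ p $ i2 = (if p = i1 then 1 else 0))
     \<and> (\<forall>q. (Pi1 ** B ** P1) $ i1 $ q = (if q = i2 then 1 else 0))"
proof -
  obtain w where w: "B *v w \<noteq> 0" "B *v (B *v w) = 0" using exists_w2[OF assms] by blast
  define a where "a = B *v w"
  define b where "b = w"
  have a0: "a \<noteq> 0" using w a_def by simp
  have nb: "b \<noteq> c *\<^sub>R a" for c
  proof
    assume "b = c *\<^sub>R a"
    then have "B *v b = B *v (c *\<^sub>R a)" by simp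
    then show False using w by (simp add: a_def b_def matrix_vector_mult_scaleR)
  qed
  obtain i1 i2 where m: "a $ i1 * b $ i2 - a $ i2 * b $ i1 \<noteq> 0" using exists_minor[OF a0 nb] by blast
  have i12: "i1 \<noteq> i2" using m by auto
  define T :: "real^'n^'n" where "T = (\<chi> r s. if s = i1 then a $ r else if s = i2 then b $ r else (if r = s then 1 else 0))"
  have T1: "T *v axis i1 1 = a" by (simp add: mv_axis_eq T_def vec_eq_iff)
  have T2: "T *v axis i2 1 = b" using i12 by (simp add: mv_axis_eq T_def vec_eq_iff)
  have Tc: "(T *v c) $ r = a $ r * c $ i1 + b $ r * c $ i2 + (if r \<noteq> i1 \<and> r \<noteq> i2 then c $ r else 0)" for c r
  proof -
    have "(T *v c) $ r = (\<Sum>s\<in>UNIV. (if s = i1 then a $ r * c $ i1 else 0) + (if s = i2 then b $ r * c $ i2 else 0)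
            + (if s = r then (if r \<noteq> i1 \<and> r \<noteq> i2 then c $ r else 0) else 0))"
      unfolding matrix_vector_mult_def T_def using i12 by (auto intro!: sum.cong)
    also have "\<dots> = a $ r * c $ i1 + b $ r * c $ i2 + (if r \<noteq> i1 \<and> r \<noteq> i2 then c $ r else 0)"
      by (simp add: sum.distrib sum.delta)
    finally show ?thesis .
  qed
  have Tker: "c = 0" if "T *v c = 0" for c
  proof -
    have e1: "a $ i1 * c $ i1 + b $ i1 * c $ i2 = 0" using Tc[of c i1] that by simp
    have e2: "a $ i2 * c $ i1 + b $ i2 * c $ i2 = 0" using Tc[of c i2] that i12 by simp
    have "c $ i1 * (a $ i1 * b $ i2 - a $ i2 * b $ i1) = b $ i2 * (a $ i1 * c $ i1 + b $ i1 * c $ i2) - b $ i1 * (a $ i2 * c $ i1 + b $ i2 * c $ i2)"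
      by (simp add: algebra_simps)
    then have c1: "c $ i1 = 0" using e1 e2 m by simp
    have "c $ i2 * (a $ i1 * b $ i2 - a $ i2 * b $ i1) = a $ i1 * (a $ i2 * c $ i1 + b $ i2 * c $ i2) - a $ i2 * (a $ i1 * c $ i1 + b $ i1 * c $ i2)"
      by (simp add: algebra_simps)
    then have c2: "c $ i2 = 0" using e1 e2 m by simp
    have "c $ r = 0" for r
    proof (cases "r = i1 \<or> r = i2")
      case True then show ?thesis using c1 c2 by auto
    next
      case False then show ?thesis using Tc[of c r] that c1 c2 by simp
    qed
    then show ?thesis by (simp add: vec_eq_iff)
  qed
  obtain Ti where Ti: "Ti ** T = mat 1" "T ** Ti = mat 1" using inv_from_kernel[OF Tker] by blast
  have Tia: "Ti *v a = axis i1 1" using T1 Ti(1) by (metis matrix_vector_mul_assoc matrix_vector_mul_lid)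
  have Tib: "Ti *v b = axis i2 1" using T2 Ti(1) by (metis matrix_vector_mul_assoc matrix_vector_mul_lid)
  define R where "R = Ti ** B ** T"
  have R1: "R *v axis i1 1 = 0" unfolding R_def
    by (simp add: matrix_vector_mul_assoc[symmetric] T1 a_def w)
  have R2: "R *v axis i2 1 = axis i1 1" unfolding R_def
    by (simp add: matrix_vector_mul_assoc[symmetric] T2 b_def a_def[symmetric] Tia)
  define r where "r = R $ i1"
  have r1: "r $ i1 = 0" using R1 Cax_nth[of R i1 i1] by (simp add: r_def)
  have r2: "r $ i2 = 1" using R2 Cax_nth[of R i2 i1] by (simp add: r_def)
  define Q :: "real^'n^'n" where "Q = (\<chi> p q. if p = i2 then r $ q else (if p = q then 1 else 0))"
  have Qker: "c = 0" if "Q *v c = 0" for c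
  proof -
    have cp: "c $ p = 0" if "p \<noteq> i2" for p
    proof -
      have "(Q *v c) $ p = (\<Sum>q\<in>UNIV. (if p = q then 1 else 0) * c $ q)"
        using that by (simp add: matrix_vector_mult_def Q_def)
      also have "\<dots> = c $ p" by (simp add: if01_mult)
      finally show ?thesis using \<open>Q *v c = 0\<close> by simp
    qed
    have "c = c $ i2 *\<^sub>R axis i2 1"
    proof (rule vec_eqI2)
      fix p show "c $ p = (c $ i2 *\<^sub>R axis i2 1) $ p" using cp[of p] by (cases "p = i2") (auto simp: axis_def)
    qed
    moreover have "(Q *v c) $ i2 = r \<bullet> c" by (simp add: matrix_vector_mult_def Q_def inner_vec_def)
    ultimately have "r \<bullet> c = 0" using that by simp
    moreover have "r \<bullet> c = c $ i2" using \<open>c = c $ i2 *\<^sub>R axis i2 1\<close> r2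
      by (metis inner_ax inner_scaleR_right mult.right_neutral)
    ultimately have "c $ i2 = 0" by simp
    then show ?thesis using cp by (metis vec_eqI2 zero_index)
  qed
  obtain Qi where Qi: "Qi ** Q = mat 1" "Q ** Qi = mat 1" using inv_from_kernel[OF Qker] by blast
  have Q1: "Q *v axis i1 1 = axis i1 1"
    using i12 r1 by (simp only: mv_axis_eq) (simp add: Q_def vec_eq_iff axis_def)
  have Q2: "Q *v axis i2 1 = axis i2 1"
    using r2 by (simp only: mv_axis_eq) (simp add: Q_def vec_eq_iff axis_def)
  have Qi1: "Qi *v axis i1 1 = axis i1 1" using Q1 Qi(1) by (metis matrix_vector_mul_assoc matrix_vector_mul_lid)
  have Qi2: "Qi *v axis i2 1 = axis i2 1" using Q2 Qi(1) by (metis matrix_vector_mul_assoc matrix_vector_mul_lid)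
  have rowQ1: "axis i1 1 v* Q = axis i1 1" using i12 by (simp only: vm_axis) (simp add: Q_def vec_eq_iff axis_def)
  have rowQ2: "axis i2 1 v* Q = r" by (simp only: vm_axis) (simp add: Q_def vec_eq_iff)
  define P1 where "P1 = T ** Qi"
  define Pi1 where "Pi1 = Q ** Ti"
  have C1: "Pi1 ** B ** P1 = Q ** R ** Qi" by (simp add: P1_def Pi1_def R_def matrix_mul_assoc)
  have inv1: "Pi1 ** P1 = mat 1"
  proof -
    have "Pi1 ** P1 = Q ** (Ti ** T) ** Qi" by (simp add: P1_def Pi1_def matrix_mul_assoc)
    then show ?thesis using Ti Qi by simp
  qed
  have inv2: "P1 ** Pi1 = mat 1" using inv1 matrix_left_right_inverse by blast
  have col1: "(Q ** R ** Qi) *v axis i1 1 = 0"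
    by (simp add: matrix_vector_mul_assoc[symmetric] Qi1 R1)
  have col2: "(Q ** R ** Qi) *v axis i2 1 = axis i1 1"
    by (simp add: matrix_vector_mul_assoc[symmetric] Qi2 R2 Q1)
  have row1: "axis i1 1 v* (Q ** R ** Qi) = axis i2 1"
  proof -
    have "axis i1 1 v* (Q ** R ** Qi) = ((axis i1 1 v* Q) v* R) v* Qi" by (simp add: vector_matrix_mul_assoc)
    also have "\<dots> = (axis i2 1 v* Q) v* Qi" by (simp only: rowQ1 rowQ2) (simp only: vm_axis r_def)
    also have "\<dots> = axis i2 1" by (simp add: vector_matrix_mul_assoc Qi(2))
    finally show ?thesis .
  qed
  have f4: "\<forall>p. (Pi1 ** B ** P1) $ p $ i1 = 0"
    using col1 Cax_nth[of "Q ** R ** Qi" i1] by (simp add: C1)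
  have f5: "\<forall>p. (Pi1 ** B ** P1) $ p $ i2 = (if p = i1 then 1 else 0)"
    using col2 Cax_nth[of "Q ** R ** Qi" i2] by (simp add: C1 axis_comp)
  have f6: "\<forall>q. (Pi1 ** B ** P1) $ i1 $ q = (if q = i2 then 1 else 0)"
    using row1 vm_axis[of i1 "Q ** R ** Qi"] by (simp add: C1 axis_comp)
  show ?thesis using i12 inv1 inv2 f4 f5 f6 by blast
qed

definition dg :: "('n::finite \<Rightarrow> real) \<Rightarrow> real^'n^'n" where
  "dg f = (\<chi> p q. if p = q then f p else 0)"

lemma if0_mult: "(if P then x else 0) * (y::real) = (if P then x * y else 0)" by simp

lemma dg_left: "(dg f ** M) $ p $ q = f p * M $ p $ q"
  by (simp add: dg_def matrix_matrix_mult_def if0_mult)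

lemma dg_right: "(M ** dg g) $ p $ q = M $ p $ q * g q"
  by (simp add: dg_def matrix_matrix_mult_def if_distrib cong: if_cong)

lemma dg_conj: "(dg f ** M ** dg g) $ p $ q = f p * M $ p $ q * g q"
  by (simp add: dg_right dg_left)

lemma dg_mult: "dg f ** dg g = dg (\<lambda>p. f p * g p)"
  by (simp add: vec_eq_iff dg_right) (simp add: dg_def)

lemma dg_one: "dg (\<lambda>p. 1) = mat 1"
  by (simp add: dg_def mat_def)

lemma scaled_frames:
  fixes B :: "real^'n::finite^'n" and C1 P1 Pi1 :: "real^'n^'n"
  assumes i12: "i1 \<noteq> i2" and inv: "Pi1 ** P1 = mat 1"
    and col1: "\<forall>p. (Pi1 ** B ** P1) $ p $ i1 = 0"
    and col2: "\<forall>p. (Pi1 ** B ** P1) $ p $ i2 = (if p = i1 then 1 else 0)"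
    and row1: "\<forall>q. (Pi1 ** B ** P1) $ i1 $ q = (if q = i2 then 1 else 0)"
    and e: "0 < e" "e \<le> 1"
  defines "Pe \<equiv> P1 ** dg (\<lambda>p. if p = i1 then 1/e else 1)"
    and "Pie \<equiv> dg (\<lambda>p. if p = i1 then e else 1) ** Pi1"
  shows "Pie ** Pe = mat 1"
    and "fro (Pie ** B ** Pe) \<le> fro (Pi1 ** B ** P1)"
    and "inv_laplace_eigenvalue B (blk Pe) (e^2)"
proof -
  define C1 where "C1 = Pi1 ** B ** P1"
  define d where "d = (\<lambda>p. if p = i1 then 1/e else (1::real))"
  define di where "di = (\<lambda>p. if p = i1 then e else (1::real))"
  have Ceq: "Pie ** B ** Pe = dg di ** C1 ** dg d"
    by (simp add: Pie_def Pe_def C1_def di_def d_def matrix_mul_assoc)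
  define E where "E = Pie ** B ** Pe"
  have Ec: "E $ p $ q = di p * C1 $ p $ q * d q" for p q
    unfolding E_def Ceq by (rule dg_conj)
  show inv': "Pie ** Pe = mat 1"
  proof -
    have "Pie ** Pe = dg di ** (Pi1 ** P1) ** dg d"
      by (simp add: Pie_def Pe_def di_def d_def matrix_mul_assoc)
    also have "\<dots> = dg (\<lambda>p. di p * d p)" by (simp add: inv dg_mult)
    also have "(\<lambda>p. di p * d p) = (\<lambda>p. 1)" using e by (auto simp: di_def d_def)
    finally show ?thesis by (simp add: dg_one)
  qed
  show "fro (Pie ** B ** Pe) \<le> fro C1 "
  proof -
    have "(E $ p $ q)^2 \<le> (C1 $ p $ q)^2" for p q
    proof (cases "q = i1")
      case True then show ?thesis using col1 by (simp add: Ec C1_def)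
    next
      case False
      then have "E $ p $ q = di p * C1 $ p $ q" by (simp add: Ec d_def)
      moreover have "\<bar>di p\<bar> \<le> 1" using e by (simp add: di_def)
      ultimately have "\<bar>E $ p $ q\<bar> \<le> \<bar>C1 $ p $ q\<bar>"
        by (simp add: abs_mult mult_left_le_one_le)
      then show ?thesis by (simp add: abs_le_square_iff)
    qed
    then have "fro E \<le> fro C1"
      unfolding fro_def inner_vec_def by (simp add: power2_eq_square[symmetric] sum_mono)
    then show ?thesis by (simp add: E_def)
  qed
  have fb: "frame_bracket B (blk Pe) = fbC E" using blk_frame(2)[OF inv'] by (simp add: E_def)
  have rowE: "transpose E *v axis i1 1 = e *\<^sub>R axis i2 1"
  proof (rule vec_eqI2)
    fix q show "(transpose E *v axis i1 1) $ q = (e *\<^sub>R axis i2 1) $ q"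
      using row1 i12 by (simp only: CTax_nth) (simp add: Ec C1_def di_def d_def axis_def)
  qed
  have colE: "(transpose E *v y) $ i2 = e * y $ i1" for y
  proof -
    have "(transpose E *v y) $ i2 = (\<Sum>p\<in>UNIV. E $ p $ i2 * y $ p)"
      by (simp add: matrix_vector_mult_def transpose_def)
    also have "\<dots> = (\<Sum>p\<in>UNIV. (if p = i1 then e * y $ i1 else 0))"
      using col2 i12 by (intro sum.cong refl) (simp add: Ec C1_def di_def d_def)
    finally show ?thesis by simp
  qed
  show "inv_laplace_eigenvalue B (blk Pe) (e^2)"
    unfolding lap_eig[OF fb]
  proof (intro exI[of _ "axis (Some i1) 1"] conjI allI)
    show "(axis (Some i1) 1 :: real^('n option)) \<noteq> 0" by (simp add: axis_eq_0_iff)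
    fix \<beta> :: "real^('n option)"
    show "(transpose E *v xpart (axis (Some i1) 1)) \<bullet> (transpose E *v xpart \<beta>) = e^2 * (axis (Some i1) 1 \<bullet> \<beta>)"
      by (simp add: rowE colE power2_eq_square)
  qed
qed

lemma if_dir:
  fixes B :: "real^'n::finite^'n"
  assumes "gen_kernel_dim B \<noteq> kernel_dim B"
  shows "\<exists>F :: nat \<Rightarrow> real^('n option)^('n option).
            (\<forall>k. admissible_frame (F k))
          \<and> (\<exists>C. \<forall>k u v. ((u \<bullet> u) * (v \<bullet> v) - (u \<bullet> v)^2 \<noteq> 0)
                 \<longrightarrow> \<bar>sec_curv B (F k) u v\<bar> \<le> C)
          \<and> (\<forall>k. \<exists>lam>0. inv_laplace_eigenvalue B (F k) lam)
          \<and> (\<lambda>k. lambda_inv_11 B (F k)) \<longlonglongrightarrow> 0"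
proof -
  obtain P1 Pi1 :: "real^'n^'n" and i1 i2 where
    h: "i1 \<noteq> i2" "Pi1 ** P1 = mat 1" "P1 ** Pi1 = mat 1"
       "\<forall>p. (Pi1 ** B ** P1) $ p $ i1 = 0"
       "\<forall>p. (Pi1 ** B ** P1) $ p $ i2 = (if p = i1 then 1 else 0)"
       "\<forall>q. (Pi1 ** B ** P1) $ i1 $ q = (if q = i2 then 1 else 0)"
    using exists_C1[OF assms] by blast
  define ek where "ek = (\<lambda>k::nat. inverse (real (Suc k)))"
  have ek: "0 < ek k" "ek k \<le> 1" for k by (auto simp: ek_def field_simps)
  define Pe where "Pe = (\<lambda>k. P1 ** dg (\<lambda>p. if p = i1 then 1/ek k else 1))"
  define Pie where "Pie = (\<lambda>k. dg (\<lambda>p. if p = i1 then ek k else 1) ** Pi1)"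
  define F where "F = (\<lambda>k. blk (Pe k))"
  note sf = scaled_frames[OF h(1) h(2) h(4) h(5) h(6) ek(1) ek(2)]
  have inv: "Pie k ** Pe k = mat 1" for k using sf(1)[of k] by (simp add: Pie_def Pe_def)
  have frob: "fro (Pie k ** B ** Pe k) \<le> fro (Pi1 ** B ** P1)" for k
    using sf(2)[of k] by (simp add: Pie_def Pe_def)
  have eig: "inv_laplace_eigenvalue B (F k) ((ek k)^2)" for k
    using sf(3)[of k] by (simp add: F_def Pe_def)
  have adm: "admissible_frame (F k)" for k using blk_frame(1)[OF inv] by (simp add: F_def)
  have fb: "frame_bracket B (F k) = fbC (Pie k ** B ** Pe k)" for k
    using blk_frame(2)[OF inv] by (simp add: F_def)
  define L where "L = sqrt (fro (Pi1 ** B ** P1))"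
  have curvb: "\<bar>sec_curv B (F k) u v\<bar> \<le> 24 * L^2"
    if "(u \<bullet> u) * (v \<bullet> v) - (u \<bullet> v)^2 \<noteq> 0" for k u v
  proof -
    define C where "C = Pie k ** B ** Pe k"
    have sL: "sqrt (fro C) \<le> L" unfolding L_def C_def using frob[of k] by simp
    interpret Cbd C L
    proof
      show "0 \<le> L" by (simp add: L_def fro_nonneg)
      fix y
      show "norm (C *v y) \<le> L * norm y"
        using fro_mv[of C y] sL by (meson mult_right_mono norm_ge_zero order_trans)
      show "norm (transpose C *v y) \<le> L * norm y"
        using fro_mv[of "transpose C" y] sL by (simp add: fro_transpose) (meson mult_right_mono norm_ge_zero order_trans)
    qed
    have "sec_curv B (F k) = secC C" using transfer_all(3)[OF fb] by (simp add: C_def)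
    then show ?thesis using sec_bound[OF that] by simp
  qed
  have lamb: "0 \<le> lambda_inv_11 B (F k) \<and> lambda_inv_11 B (F k) \<le> (ek k)^2" for k
  proof -
    define S where "S = {lam. lam > 0 \<and> inv_laplace_eigenvalue B (F k) lam}"
    have inS: "(ek k)^2 \<in> S" using eig[of k] ek(1)[of k] by (simp add: S_def)
    have bdd: "bdd_below S" by (rule bdd_belowI[of _ 0]) (auto simp: S_def)
    have "Inf S \<le> (ek k)^2" by (rule cInf_lower[OF inS bdd])
    moreover have "0 \<le> Inf S"
    proof -
      have ne: "S \<noteq> {}" using inS by blast
      show ?thesis by (rule cInf_greatest[OF ne]) (simp add: S_def)
    qed
    ultimately show ?thesis by (simp add: lambda_inv_11_def S_def)
  qed
  have lim0: "(\<lambda>k. (ek k)^2) \<longlonglongrightarrow> 0"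
    using tendsto_power[OF LIMSEQ_inverse_real_of_nat, of 2] by (simp add: ek_def)
  have lim: "(\<lambda>k. lambda_inv_11 B (F k)) \<longlonglongrightarrow> 0"
    by (rule tendsto_sandwich[OF _ _ tendsto_const lim0]) (use lamb in auto)
  have c2: "\<exists>C. \<forall>k u v. ((u \<bullet> u) * (v \<bullet> v) - (u \<bullet> v)^2 \<noteq> 0)
                 \<longrightarrow> \<bar>sec_curv B (F k) u v\<bar> \<le> C"
    using curvb by blast
  have c3: "\<forall>k. \<exists>lam>0. inv_laplace_eigenvalue B (F k) lam"
    using eig ek(1) by (metis zero_less_power)
  show ?thesis using adm c2 c3 lim by blast
qed

theorem mainTheorem3:
  fixes A :: "int^'n::finite^'n" and B :: "real^'n^'n"
  assumes "CARD('n) \<ge> 2"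
    and "det A = 1"
    and "mat_exp B = (\<chi> i j. real_of_int (A $ i $ j))"
  shows "(\<exists>F :: nat \<Rightarrow> real^('n option)^('n option).
            (\<forall>k. admissible_frame (F k))
          \<and> (\<exists>C. \<forall>k u v. ((u \<bullet> u) * (v \<bullet> v) - (u \<bullet> v)^2 \<noteq> 0)
                 \<longrightarrow> \<bar>sec_curv B (F k) u v\<bar> \<le> C)
          \<and> (\<forall>k. \<exists>lam>0. inv_laplace_eigenvalue B (F k) lam)
          \<and> (\<lambda>k. lambda_inv_11 B (F k)) \<longlonglongrightarrow> 0)
     \<longleftrightarrow> gen_kernel_dim B \<noteq> kernel_dim B"
proof
  assume "\<exists>F :: nat \<Rightarrow> real^('n option)^('n option).
            (\<forall>k. admissible_frame (F k))
          \<and> (\<exists>C. \<forall>k u v. ((u \<bullet> u) * (v \<bullet> v) - (u \<bullet> v)^2 \<noteq> 0)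
                 \<longrightarrow> \<bar>sec_curv B (F k) u v\<bar> \<le> C)
          \<and> (\<forall>k. \<exists>lam>0. inv_laplace_eigenvalue B (F k) lam)
          \<and> (\<lambda>k. lambda_inv_11 B (F k)) \<longlonglongrightarrow> 0"
  then obtain F :: "nat \<Rightarrow> real^('n option)^('n option)" and Cb where
    "\<forall>k. admissible_frame (F k)"
    "\<forall>k u v. ((u \<bullet> u) * (v \<bullet> v) - (u \<bullet> v)^2 \<noteq> 0) \<longrightarrow> \<bar>sec_curv B (F k) u v\<bar> \<le> Cb"
    "\<forall>k. \<exists>lam>0. inv_laplace_eigenvalue B (F k) lam"
    "(\<lambda>k. lambda_inv_11 B (F k)) \<longlonglongrightarrow> 0" by blast
  then show "gen_kernel_dim B \<noteq> kernel_dim B" by (rule only_if)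
next
  assume "gen_kernel_dim B \<noteq> kernel_dim B"
  then show "\<exists>F :: nat \<Rightarrow> real^('n option)^('n option).
            (\<forall>k. admissible_frame (F k))
          \<and> (\<exists>C. \<forall>k u v. ((u \<bullet> u) * (v \<bullet> v) - (u \<bullet> v)^2 \<noteq> 0)
                 \<longrightarrow> \<bar>sec_curv B (F k) u v\<bar> \<le> C)
          \<and> (\<forall>k. \<exists>lam>0. inv_laplace_eigenvalue B (F k) lam)
          \<and> (\<lambda>k. lambda_inv_11 B (F k)) \<longlonglongrightarrow> 0" by (rule if_dir)
qed

end
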